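(* Let $N\ge1$, $m=2$, $d=1$, and for every $t=1,\dots,N$ let $m_t=3$, $(q^{(t)}_1,q^{(t)}_2,q^{(t)}_3)=(0,1/2,3/2)$ and $\boldsymbol a^{(t)}=(1/3,1/3,1/3)$. Consider the point $X=(0,1)$, $\boldsymbol w=(1/3,2/3)$, and for all $t$, $\Pi^{(t)}$ with first row $(1/3,0,0)$ and second row $(0,1/3,1/3)$. Then: (i) with $X$ fixed, $(\boldsymbol w,\Pi^{(1)},\dots,\Pi^{(N)})$ is an optimal solution of the resulting linear program; (ii) with $(\boldsymbol w,\Pi^{(1)},\dots,\Pi^{(N)})$ fixed, $X$ minimizes the objective over $X\in\mathbb{R}^2$; (iii) nevertheless, this point is not a local minimum of the free support problem, and for every $\delta\in(0,1/2)$ there is a feasible point with $X=(\delta,1)$ and strictly smaller objective value.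
   Context: Free support problem: given discrete measures with support points $q^{(t)}_j\in\mathbb{R}^d$ and weights $\boldsymbol a^{(t)}\in\mathbb{R}^{m_t}$ (nonnegative, summing to 1), $t=1,\dots,N$, minimize $\sum_{t=1}^N\sum_{i=1}^m\sum_{j=1}^{m_t}\pi^{(t)}_{ij}\|\boldsymbol x_i-\boldsymbol q^{(t)}_j\|^2$ over $X=(\boldsymbol x_1,\dots,\boldsymbol x_m)\in(\mathbb{R}^d)^m$, $\boldsymbol w\in\mathbb{R}^m$ and $\Pi^{(t)}=[\pi^{(t)}_{ij}]\in\mathbb{R}^{m\times m_t}$, subject to $\boldsymbol w\ge0$, $\boldsymbol 1_m^{\top}\boldsymbol w=1$, $\Pi^{(t)}\ge0$, $\Pi^{(t)}\boldsymbol 1_{m_t}=\boldsymbol w$, $(\Pi^{(t)})^{\top}\boldsymbol 1_m=\boldsymbol a^{(t)}$ for all $t$. For fixed $X$ this is a linear program in $(\boldsymbol w,\Pi^{(1)},\dots,\Pi^{(N)})$. A local minimum means a feasible point whose objective value is no larger than that of every feasible point in some neighborhood of it (in the joint variables). *)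

theory Defs
  imports "HOL-Analysis.Analysis"
begin

text \<open>Free support problem with d = 1.  The measures are indexed by a finite
  type 'n (so N = CARD('n) \<ge> 1), the barycenter support points by the finite
  type 'm, and the support points of each input measure by the finite type 'k.\<close>

definition fs_obj :: "real^'k^'n \<Rightarrow> real^'m \<Rightarrow> real^'k^'m^'n \<Rightarrow> real" where
  "fs_obj q X P = (\<Sum>t\<in>UNIV. \<Sum>i\<in>UNIV. \<Sum>j\<in>UNIV. P$t$i$j * (X$i - q$t$j)^2)"

definition fs_feasible :: "real^'k^'n \<Rightarrow> real^'m \<Rightarrow> real^'k^'m^'n \<Rightarrow> bool" where
  "fs_feasible a w P \<longleftrightarrow>
     (\<forall>i. w$i \<ge> 0) \<and> (\<Sum>i\<in>UNIV. w$i) = 1 \<and>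
     (\<forall>t i j. P$t$i$j \<ge> 0) \<and>
     (\<forall>t i. (\<Sum>j\<in>UNIV. P$t$i$j) = w$i) \<and>
     (\<forall>t j. (\<Sum>i\<in>UNIV. P$t$i$j) = a$t$j)"

definition fs_local_min ::
  "real^'k^'n \<Rightarrow> real^'k^'n \<Rightarrow> real^'m \<Rightarrow> real^'m \<Rightarrow> real^'k^'m^'n \<Rightarrow> bool" where
  "fs_local_min q a X w P \<longleftrightarrow> fs_feasible a w P \<and>
     (\<exists>e>0. \<forall>X' w' P'. dist (X', w', P') (X, w, P) < e \<longrightarrow> fs_feasible a w' P' \<longrightarrow>
        fs_obj q X P \<le> fs_obj q X' P')"

end

theory Submission
  imports Defs
begin

lemma dist3: "dist (a::'a::metric_space, b::'b::metric_space, c::'c::metric_space) (a', b', c')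
   \<le> dist a a' + dist b b' + dist c c'"
proof -
  have "dist (a,b,c) (a',b',c') \<le> dist a a' + dist (b,c) (b',c')"
    unfolding dist_Pair_Pair[of a "(b,c)"]
    by (metis abs_of_nonneg dist_Pair_Pair zero_le_dist sqrt_sum_squares_le_sum_abs)
  also have "dist (b,c) (b',c') \<le> dist b b' + dist c c'"
    by (metis abs_of_nonneg dist_Pair_Pair zero_le_dist sqrt_sum_squares_le_sum_abs)
  finally show ?thesis by simp
qed

lemma norm_l1_vec: "norm (y::'b::real_normed_vector^'a) \<le> (\<Sum>i\<in>UNIV. norm (y$i))"
  by (simp add: norm_vec_def L2_set_le_sum)

lemma norm_l1_3: "norm (x::real^'k^'m^'n) \<le> (\<Sum>t\<in>UNIV. \<Sum>i\<in>UNIV. \<Sum>j\<in>UNIV. \<bar>x$t$i$j\<bar>)"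
proof -
  have "norm x \<le> (\<Sum>t\<in>UNIV. norm (x$t))" by (rule norm_l1_vec)
  also have "\<dots> \<le> (\<Sum>t\<in>UNIV. \<Sum>i\<in>UNIV. norm (x$t$i))"
    by (intro sum_mono) (rule norm_l1_vec)
  also have "\<dots> \<le> (\<Sum>t\<in>UNIV. \<Sum>i\<in>UNIV. \<Sum>j\<in>UNIV. \<bar>x$t$i$j\<bar>)"
    by (intro sum_mono) (simp add: norm_le_l1_cart)
  finally show ?thesis .
qed

theorem mainTheorem8:
  fixes q a :: "real^3^'n" and X w :: "real^2" and P :: "real^3^2^'n"
  assumes "q = (\<chi> t. vector [0, 1/2, 3/2])"
      and "a = (\<chi> t. vector [1/3, 1/3, 1/3])"
      and "X = vector [0, 1]"
      and "w = vector [1/3, 2/3]"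
      and "P = (\<chi> t. vector [vector [1/3, 0, 0], vector [0, 1/3, 1/3]])"
  shows "(fs_feasible a w P \<and>
          (\<forall>w' P'. fs_feasible a w' P' \<longrightarrow> fs_obj q X P \<le> fs_obj q X P'))
       \<and> (\<forall>X'. fs_obj q X P \<le> fs_obj q X' P)
       \<and> \<not> fs_local_min q a X w P
       \<and> (\<forall>\<delta>::real. 0 < \<delta> \<and> \<delta> < 1/2 \<longrightarrow>
            (\<exists>(w'::real^2) (P'::real^3^2^'n). fs_feasible a w' P' \<and> fs_obj q (vector [\<delta>, 1] :: real^2) P' < fs_obj q X P))"
proof -
  define N where "N = real CARD('n)"
  have N0: "N > 0" unfolding N_def by simp
  have objP: "fs_obj q X P = N/6"
    unfolding fs_obj_def assms N_def by (simp add: sum_2 sum_3 power2_eq_square)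
  have feasP: "fs_feasible a w P"
    unfolding fs_feasible_def assms by (simp add: sum_2 sum_3 forall_2 forall_3)
  have i: "\<forall>w' P'. fs_feasible a w' P' \<longrightarrow> fs_obj q X P \<le> fs_obj q X P'"
  proof (intro allI impI)
    fix w' :: "real^2" and P' :: "real^3^2^'n" assume f: "fs_feasible a w' P'"
    have "fs_obj q X P' = (\<Sum>t\<in>UNIV. P'$t$1$2/4 + P'$t$1$3*(9/4) + P'$t$2$1 + P'$t$2$2/4 + P'$t$2$3/4)"
      unfolding fs_obj_def assms by (simp add: sum_2 sum_3 power2_eq_square algebra_simps)
    also have "\<dots> \<ge> (\<Sum>t\<in>(UNIV::'n set). 1/6)"
    proof (rule sum_mono)
      fix t
      have c0: "\<forall>j. P'$t$1$j + P'$t$2$j = vector [1/3, 1/3, 1/3] $ j" using f unfolding fs_feasible_def assms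
        by (auto simp: sum_2)
      have c1: "P'$t$1$1 + P'$t$2$1 = 1/3" using c0[rule_format, of 1] by simp
      have c2: "P'$t$1$2 + P'$t$2$2 = 1/3" using c0[rule_format, of 2] by simp
      have c3: "P'$t$1$3 + P'$t$2$3 = 1/3" using c0[rule_format, of 3] by simp
      have nn: "\<And>i j. P'$t$i$j \<ge> 0" using f unfolding fs_feasible_def by auto
      show "1/6 \<le> P'$t$1$2/4 + P'$t$1$3*(9/4) + P'$t$2$1 + P'$t$2$2/4 + P'$t$2$3/4"
        using c1 c2 c3 nn[of 1 3] nn[of 2 1] by linarith
    qed
    finally show "fs_obj q X P \<le> fs_obj q X P'" using objP N_def by simp
  qed
  have ii: "\<forall>X'. fs_obj q X P \<le> fs_obj q X' P"
  proof
    fix X' :: "real^2"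
    have "fs_obj q X' P = N * ((X'$1)^2/3 + (X'$2 - 1/2)^2/3 + (X'$2 - 3/2)^2/3)"
      unfolding fs_obj_def assms N_def by (simp add: sum_2 sum_3)
    also have "\<dots> = N * ((X'$1)^2/3 + 2*(X'$2 - 1)^2/3 + 1/6)"
      by (simp add: power2_eq_square field_simps)
    also have "\<dots> \<ge> N * (1/6)" using N0 by (intro mult_left_mono) auto
    finally show "fs_obj q X P \<le> fs_obj q X' P" using objP by simp
  qed
  have iv: "\<forall>\<delta>::real. 0 < \<delta> \<and> \<delta> < 1/2 \<longrightarrow>
            (\<exists>(w'::real^2) (P'::real^3^2^'n). fs_feasible a w' P' \<and> fs_obj q (vector [\<delta>, 1] :: real^2) P' < fs_obj q X P)"
  proof (intro allI impI)
    fix d :: real assume d: "0 < d \<and> d < 1/2"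
    define P' :: "real^3^2^'n" where "P' = (\<chi> t. vector [vector [1/3, 1/3, 0], vector [0, 0, 1/3]])"
    have "fs_feasible a (vector [2/3, 1/3]) P'"
      unfolding fs_feasible_def assms P'_def by (simp add: sum_2 sum_3 forall_2 forall_3)
    moreover have "fs_obj q (vector [d, 1] :: real^2) P' = N * ((d^2 + (1/2-d)^2 + 1/4)/3)"
      unfolding fs_obj_def assms P'_def N_def by (simp add: sum_2 sum_3 power2_eq_square field_simps)
    moreover have "N * ((d^2 + (1/2-d)^2 + 1/4)/3) < N/6"
    proof -
      have h: "d*(1-2*d) > 0" using d by (intro mult_pos_pos) auto
      have e: "d^2 + (1/2-d)^2 + 1/4 = 1/2 - d*(1-2*d)" by (simp add: power2_eq_square field_simps)
      have "d^2 + (1/2-d)^2 + 1/4 < 1/2" using h e by linarith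
      then show ?thesis using N0 by simp
    qed
    ultimately show "\<exists>(w'::real^2) (P'::real^3^2^'n). fs_feasible a w' P' \<and> fs_obj q (vector [d, 1] :: real^2) P' < fs_obj q X P"
      using objP by metis
  qed
  have iii: "\<not> fs_local_min q a X w P"
  proof
    assume "fs_local_min q a X w P"
    then obtain e where e0: "e > 0" and E: "\<And>X' w' P'. dist (X', w', P') (X, w, P) < e \<Longrightarrow> fs_feasible a w' P' \<Longrightarrow>
        fs_obj q X P \<le> fs_obj q X' P'" unfolding fs_local_min_def by blast
    define d where "d = min (1/4) (e/(4+2*N))"
    have d0: "d > 0" using e0 N0 unfolding d_def by auto
    have d1: "d \<le> 1/4" unfolding d_def by (rule min.cobounded1)
    have d2: "d \<le> e/(4+2*N)" unfolding d_def by (rule min.cobounded2)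
    define X' :: "real^2" where "X' = vector [d, 1]"
    define w' :: "real^2" where "w' = vector [1/3 + d, 2/3 - d]"
    define P' :: "real^3^2^'n" where "P' = (\<chi> t. vector [vector [1/3, d, 0], vector [0, 1/3 - d, 1/3]])"
    have dd: "0 \<le> 1/3 - d" "0 \<le> d" "0 \<le> 2/3 - d" "0 \<le> 1/3 + d" using d0 d1 by auto
    have feas: "fs_feasible a w' P'"
      unfolding fs_feasible_def assms P'_def w'_def using dd
      by (simp add: sum_2 sum_3 forall_2 forall_3)
    have obj: "fs_obj q X' P' = N * (1/6 - 2*d^2/3 + d^3)"
      unfolding fs_obj_def assms P'_def X'_def N_def
      by (simp add: sum_2 sum_3 power2_eq_square power3_eq_cube field_simps)
    have lt: "1/6 - 2*d^2/3 + d^3 < 1/6"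
    proof -
      have "d^2 * (2/3 - d) > 0" using d0 d1 by (intro mult_pos_pos) auto
      moreover have "2*d^2/3 - d^3 = d^2 * (2/3 - d)" by (simp add: power2_eq_square power3_eq_cube field_simps)
      ultimately show ?thesis by linarith
    qed
    have dX: "dist X' X \<le> d"
    proof -
      have "dist X' X \<le> (\<Sum>i\<in>UNIV. \<bar>(X' - X)$i\<bar>)" unfolding dist_norm by (rule norm_le_l1_cart)
      also have "\<dots> = d" unfolding X'_def assms using d0 by (simp add: sum_2)
      finally show ?thesis .
    qed
    have dw: "dist w' w \<le> 2*d"
    proof -
      have "dist w' w \<le> (\<Sum>i\<in>UNIV. \<bar>(w' - w)$i\<bar>)" unfolding dist_norm by (rule norm_le_l1_cart)
      also have "\<dots> = 2*d" unfolding w'_def assms using d0 by (simp add: sum_2)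
      finally show ?thesis .
    qed
    have dP: "dist P' P \<le> 2*d*N"
    proof -
      have "dist P' P \<le> (\<Sum>t\<in>UNIV. \<Sum>i\<in>UNIV. \<Sum>j\<in>UNIV. \<bar>(P' - P)$t$i$j\<bar>)" unfolding dist_norm by (rule norm_l1_3)
      also have "\<dots> = 2*d*N" unfolding P'_def assms N_def using d0 by (simp add: sum_2 sum_3)
      finally show ?thesis .
    qed
    have "dist (X', w', P') (X, w, P) \<le> d + 2*d + 2*d*N" using dist3[of X' w' P' X w P] dX dw dP by linarith
    also have "\<dots> = d * (3 + 2*N)" by (simp add: algebra_simps)
    also have "\<dots> \<le> e/(4+2*N) * (3 + 2*N)" using d2 N0 by (intro mult_right_mono) auto
    also have "\<dots> < e"
    proof -
      have "e * (3 + 2*N) < e * (4+2*N)" using e0 by simp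
      then show ?thesis using N0 by (simp add: field_simps)
    qed
    finally have "fs_obj q X P \<le> fs_obj q X' P'" using E feas by blast
    then show False using obj objP lt N0 by simp
  qed
  show ?thesis using feasP i ii iii iv by blast
qed

end
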